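(* Let $(E,\|\cdot\|)$ be a real Banach space and $\mathcal{C}\subset E$ a closed convex cone with $\mathbb{R}_+\mathcal{C}=\mathcal{C}$ and $\mathcal{C}\cap(-\mathcal{C})=\{0\}$. Assume: (H1) there are $\ell\in E'$ with $\|\ell\|=1$ and $K\in[1,\infty)$ with $\langle\ell,\phi\rangle\ge\frac1K\|\phi\|$ for all $\phi\in\mathcal{C}$; (H2) $\rho\in(0,1]$ is fixed such that $\mathcal{C}(\rho)=\{\phi\in\mathcal{C}:B(\phi,\rho\|\phi\|)\subset\mathcal{C}\}$ contains a nonzero element. Set $\mathcal{C}_{\ell=1}(\rho)=\{\phi\in\mathcal{C}(\rho):\langle\ell,\phi\rangle=1\}$. Let $\mathcal{M}\subset L(E)$ be a collection of operators such that, for some $1\le\vartheta<\infty$ and every $L\in\mathcal{M}$: (H3) $L(\mathcal{C}\setminus\{0\})\subset\mathcal{C}(\rho)\setminus\{0\}$, and (H4) $\frac1\vartheta\le\|L\|\le\vartheta$. Let $(\Omega,\mathcal{F},\mathbb{P})$ be a probability space with an invertible, measure-preserving, ergodic map $\tau$. Let $X=L^\infty(\Omega,E)$ be the Banach space of uniformly bounded Bochner measurable maps $\boldsymbol{\phi}=(\phi_\omega)_{\omega\in\Omega}:\Omega\to E$ with norm $\sup_\omega\|\phi_\omega\|$. Let $(\mathcal{L}_\omega)_{\omega\in\Omega}$ be a family with values in $\mathcal{M}$ such that $\mathbf{L}:X\to X$, $(\mathbf{L}\boldsymbol{\phi})_\omega=\mathcal{L}_{\tau^{-1}\omega}\phi_{\tau^{-1}\omega}$,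 is well defined (i.e. preserves Bochner measurability of sections). For $\boldsymbol{\phi}\in X$ with $\phi_\omega\in\mathcal{C}\setminus\{0\}$ for all $\omega$, define \[(\boldsymbol{\pi}(\boldsymbol{\phi}))_\omega=\frac{\mathcal{L}_{\tau^{-1}\omega}\phi_{\tau^{-1}\omega}}{\langle\ell,\mathcal{L}_{\tau^{-1}\omega}\phi_{\tau^{-1}\omega}\rangle}.\] Then $\boldsymbol{\pi}$ admits a unique fixed point section $\mathbf{f}=\boldsymbol{\pi}(\mathbf{f})\in X$ with $f_\omega\in\mathcal{C}_{\ell=1}(\rho)$ for all $\omega\in\Omega$.
   Context: A map $\Omega\to E$ is Bochner measurable if it is a uniform limit of $\mathcal{F}$-measurable maps with countable image. *)

theory Defs
  imports "HOL-Probability.Probability"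
begin

definition meas_preserving :: "'w measure \<Rightarrow> ('w \<Rightarrow> 'w) \<Rightarrow> bool" where
  "meas_preserving P T \<longleftrightarrow> T \<in> measurable P P \<and>
     (\<forall>A \<in> sets P. emeasure P (T -` A \<inter> space P) = emeasure P A)"

definition ergodic_map :: "'w measure \<Rightarrow> ('w \<Rightarrow> 'w) \<Rightarrow> bool" where
  "ergodic_map P T \<longleftrightarrow> (\<forall>A \<in> sets P. T -` A \<inter> space P = A \<longrightarrow>
       emeasure P A = 0 \<or> emeasure P A = 1)"

definition countably_valued_meas :: "'w measure \<Rightarrow> ('w \<Rightarrow> 'e) \<Rightarrow> bool" where
  "countably_valued_meas P g \<longleftrightarrow> countable (g ` space P) \<and>
     (\<forall>y. g -` {y} \<inter> space P \<in> sets P)"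

definition bochner_meas :: "'w measure \<Rightarrow> ('w \<Rightarrow> 'e::metric_space) \<Rightarrow> bool" where
  "bochner_meas P f \<longleftrightarrow> (\<exists>g :: nat \<Rightarrow> 'w \<Rightarrow> 'e. (\<forall>n. countably_valued_meas P (g n)) \<and>
     (\<forall>e>0. \<exists>N. \<forall>n\<ge>N. \<forall>\<omega>\<in>space P. dist (g n \<omega>) (f \<omega>) < e))"

definition Linf_sections :: "'w measure \<Rightarrow> ('w \<Rightarrow> 'e::real_normed_vector) set" where
  "Linf_sections P = {f. bochner_meas P f \<and> (\<exists>B. \<forall>\<omega>\<in>space P. norm (f \<omega>) \<le> B)}"

definition cone_rho :: "'e::real_normed_vector set \<Rightarrow> real \<Rightarrow> 'e set" where
  "cone_rho C \<rho> = {\<phi> \<in> C. ball \<phi> (\<rho> * norm \<phi>) \<subseteq> C}"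

definition cone_rho_l1 :: "'e::real_normed_vector set \<Rightarrow> real \<Rightarrow> ('e \<Rightarrow> real) \<Rightarrow> 'e set" where
  "cone_rho_l1 C \<rho> ell = {\<phi> \<in> cone_rho C \<rho>. ell \<phi> = 1}"

definition proj_op :: "('w \<Rightarrow> 'e \<Rightarrow> 'e) \<Rightarrow> ('w \<Rightarrow> 'w) \<Rightarrow> ('e \<Rightarrow> real) \<Rightarrow> ('w \<Rightarrow> 'e) \<Rightarrow> 'w \<Rightarrow> 'e::real_normed_vector" where
  "proj_op Lf \<tau>i ell \<phi> \<omega> = (1 / ell (Lf (\<tau>i \<omega>) (\<phi> (\<tau>i \<omega>)))) *\<^sub>R Lf (\<tau>i \<omega>) (\<phi> (\<tau>i \<omega>))"

end

theory Submission imports Defs begin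

lemma bm_uc:
  fixes g :: "'w \<Rightarrow> 'a::metric_space" and F :: "'a \<Rightarrow> 'b::metric_space"
  assumes "bochner_meas P g" "\<forall>\<omega>\<in>space P. g \<omega> \<in> S" "uniformly_continuous_on S F"
  shows "bochner_meas P (\<lambda>\<omega>. F (g \<omega>))"
proof -
  obtain h :: "nat \<Rightarrow> 'w \<Rightarrow> 'a" where hc: "\<forall>n. countably_valued_meas P (h n)"
    and hu: "\<forall>e>0. \<exists>N. \<forall>n\<ge>N. \<forall>\<omega>\<in>space P. dist (h n \<omega>) (g \<omega>) < e"
    using assms(1) unfolding bochner_meas_def by blast
  define pick where "pick n y = (SOME \<omega>. \<omega> \<in> space P \<and> h n \<omega> = y)" for n y
  define h' where "h' n \<omega> = F (g (pick n (h n \<omega>)))" for n \<omega>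
  have pick: "pick n (h n \<omega>) \<in> space P \<and> h n (pick n (h n \<omega>)) = h n \<omega>" if "\<omega> \<in> space P" for n \<omega>
    unfolding pick_def by (rule someI[where x=\<omega>]) (simp add: that)
  have cv: "countably_valued_meas P (h' n)" for n
  proof -
    have cnt: "countable (h n ` space P)" using hc unfolding countably_valued_meas_def by blast
    have "h' n ` space P \<subseteq> (\<lambda>y. F (g (pick n y))) ` (h n ` space P)" unfolding h'_def by auto
    hence c1: "countable (h' n ` space P)" by (meson cnt countable_image countable_subset)
    have eq: "h' n -` {z} \<inter> space P = (\<Union>y\<in>{y\<in>h n ` space P. F (g (pick n y)) = z}. h n -` {y} \<inter> space P)" for z
      unfolding h'_def by auto
    have "(\<Union>y\<in>{y\<in>h n ` space P. F (g (pick n y)) = z}. h n -` {y} \<inter> space P) \<in> sets P" for z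
      apply (rule sets.countable_UN'')
      using cnt apply (simp add: countable_subset[of _ "h n ` space P"])
      using hc unfolding countably_valued_meas_def by blast
    thus ?thesis unfolding countably_valued_meas_def using c1 eq by simp
  qed
  have "\<exists>N. \<forall>n\<ge>N. \<forall>\<omega>\<in>space P. dist (h' n \<omega>) (F (g \<omega>)) < e" if e: "e > 0" for e
  proof -
    obtain d where d: "d > 0" "\<forall>x\<in>S. \<forall>x'\<in>S. dist x' x < d \<longrightarrow> dist (F x') (F x) < e"
      using assms(3) e unfolding uniformly_continuous_on_def by blast
    obtain N where N: "\<forall>n\<ge>N. \<forall>\<omega>\<in>space P. dist (h n \<omega>) (g \<omega>) < d/2"
      using hu d(1) by (meson half_gt_zero)
    have "dist (h' n \<omega>) (F (g \<omega>)) < e" if "n \<ge> N" "\<omega> \<in> space P" for n \<omega>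
    proof -
      define \<omega>' where "\<omega>' = pick n (h n \<omega>)"
      have w': "\<omega>' \<in> space P" "h n \<omega>' = h n \<omega>" using pick[OF that(2)] unfolding \<omega>'_def by auto
      have "dist (g \<omega>') (g \<omega>) \<le> dist (h n \<omega>') (g \<omega>') + dist (h n \<omega>) (g \<omega>)"
        using w'(2) dist_triangle3[of "g \<omega>'" "g \<omega>" "h n \<omega>"] by (simp add: dist_commute)
      also have "\<dots> < d"
      proof -
        have "dist (h n \<omega>') (g \<omega>') < d/2" using N that(1) w'(1) by blast
        moreover have "dist (h n \<omega>) (g \<omega>) < d/2" using N that by blast
        ultimately show ?thesis by linarith
      qed
      finally have "dist (g \<omega>') (g \<omega>) < d" .
      hence "dist (F (g \<omega>')) (F (g \<omega>)) < e" using d(2) assms(2) w'(1) that(2) by blast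
      thus ?thesis unfolding h'_def \<omega>'_def .
    qed
    thus ?thesis by blast
  qed
  hence "\<forall>e>0. \<exists>N. \<forall>n\<ge>N. \<forall>\<omega>\<in>space P. dist (h' n \<omega>) (F (g \<omega>)) < e" by blast
  thus ?thesis unfolding bochner_meas_def using cv by blast
qed

lemma bm_ulim:
  fixes f :: "nat \<Rightarrow> 'w \<Rightarrow> 'e::metric_space"
  assumes "\<forall>k. bochner_meas P (f k)" "\<forall>e>0. \<exists>N. \<forall>k\<ge>N. \<forall>\<omega>\<in>space P. dist (f k \<omega>) (g \<omega>) < e"
  shows "bochner_meas P g"
proof -
  have "\<forall>k. \<exists>h. countably_valued_meas P h \<and> (\<forall>\<omega>\<in>space P. dist (h \<omega>) (f k \<omega>) < 1 / Suc k)"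
  proof
    fix k
    obtain H :: "nat \<Rightarrow> 'w \<Rightarrow> 'e" where H1: "\<forall>n. countably_valued_meas P (H n)" and H2:
      "\<forall>e>0. \<exists>N. \<forall>n\<ge>N. \<forall>\<omega>\<in>space P. dist (H n \<omega>) (f k \<omega>) < e"
      using assms(1) unfolding bochner_meas_def by blast
    have "(1::real) / Suc k > 0" by simp
    then obtain N where "\<forall>n\<ge>N. \<forall>\<omega>\<in>space P. dist (H n \<omega>) (f k \<omega>) < 1 / Suc k" using H2 by blast
    thus "\<exists>h. countably_valued_meas P h \<and> (\<forall>\<omega>\<in>space P. dist (h \<omega>) (f k \<omega>) < 1 / Suc k)"
      using H1 by (intro exI[of _ "H N"]) auto
  qed
  from choice[OF this] obtain h where h: "\<forall>k. countably_valued_meas P (h k) \<and> (\<forall>\<omega>\<in>space P. dist (h k \<omega>) (f k \<omega>) < 1 / Suc k)"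
    by blast
  have "\<forall>e>0. \<exists>N. \<forall>k\<ge>N. \<forall>\<omega>\<in>space P. dist (h k \<omega>) (g \<omega>) < e"
  proof (intro allI impI)
    fix e :: real assume e: "e > 0"
    obtain N1 where N1: "\<forall>k\<ge>N1. \<forall>\<omega>\<in>space P. dist (f k \<omega>) (g \<omega>) < e/2" using assms(2) e half_gt_zero by blast
    obtain N2 where N2: "1 / Suc N2 < e/2" using e by (meson half_gt_zero nat_approx_posE)
    have "dist (h k \<omega>) (g \<omega>) < e" if "k \<ge> max N1 N2" "\<omega> \<in> space P" for k \<omega>
    proof -
      have "1 / real (Suc k) \<le> 1 / Suc N2" using that(1) by (intro divide_left_mono) auto
      moreover have "dist (h k \<omega>) (f k \<omega>) < 1 / Suc k" using h that(2) by blast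
      ultimately have "dist (h k \<omega>) (f k \<omega>) < e/2" using N2 by linarith
      moreover have "dist (f k \<omega>) (g \<omega>) < e/2" using N1 that by simp
      ultimately show ?thesis using dist_triangle[of "h k \<omega>" "g \<omega>" "f k \<omega>"] by linarith
    qed
    thus "\<exists>N. \<forall>k\<ge>N. \<forall>\<omega>\<in>space P. dist (h k \<omega>) (g \<omega>) < e" by (intro exI[of _ "max N1 N2"]) auto
  qed
  note A = this
  have B: "\<forall>k. countably_valued_meas P (h k)" using h by simp
  show ?thesis unfolding bochner_meas_def
    apply (rule exI[of _ h])
    using A B by simp
qed


locale cone_setup =
  fixes C :: "'e::banach set" and ell :: "'e \<Rightarrow> real" and K \<rho> \<theta> :: real
    and MM :: "('e \<Rightarrow> 'e) set"
  assumes C_closed: "closed C"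
    and C_cone: "\<forall>t\<ge>0. \<forall>x\<in>C. t *\<^sub>R x \<in> C" and C_nonempty: "C \<noteq> {}"
    and H1_lin: "bounded_linear ell" and H1_norm: "onorm ell = 1"
    and H1_K: "1 \<le> K" and H1: "\<forall>\<phi>\<in>C. ell \<phi> \<ge> norm \<phi> / K"
    and rho: "0 < \<rho>" "\<rho> \<le> 1"
    and theta: "1 \<le> \<theta>"
    and M_lin: "\<forall>L\<in>MM. bounded_linear L"
    and H3: "\<forall>L\<in>MM. L ` (C - {0}) \<subseteq> cone_rho C \<rho> - {0}"
    and H4: "\<forall>L\<in>MM. 1 / \<theta> \<le> onorm L \<and> onorm L \<le> \<theta>"
begin

sublocale ell: bounded_linear ell by (rule H1_lin)

lemma zero_C: "0 \<in> C"
proof -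
  obtain x where "x \<in> C" using C_nonempty by blast
  hence "0 *\<^sub>R x \<in> C" using C_cone by blast
  thus ?thesis by simp
qed

lemma ell_abs: "\<bar>ell x\<bar> \<le> norm x"
  using onorm[OF H1_lin, of x] H1_norm by simp

lemma normC: "x \<in> C \<Longrightarrow> norm x \<le> K * ell x"
  using H1 H1_K by (auto simp: pos_divide_le_eq mult.commute)

lemma ell_nonneg: "x \<in> C \<Longrightarrow> 0 \<le> ell x"
  using normC[of x] H1_K by (smt (verit) norm_ge_zero zero_le_mult_iff)

lemma ellC_pos: "x \<in> C \<Longrightarrow> x \<noteq> 0 \<Longrightarrow> 0 < ell x"
proof -
  assume "x \<in> C" "x \<noteq> 0"
  hence "norm x / K > 0" using H1_K by simp
  thus ?thesis using H1 \<open>x \<in> C\<close> by fastforce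
qed

lemma rho_C: "p \<in> cone_rho C \<rho> \<Longrightarrow> p \<in> C"
  unfolding cone_rho_def by simp

lemma L_rho: "L \<in> MM \<Longrightarrow> x \<in> C \<Longrightarrow> x \<noteq> 0 \<Longrightarrow> L x \<in> cone_rho C \<rho> \<and> L x \<noteq> 0"
  using H3 by blast

lemma L_zero: "L \<in> MM \<Longrightarrow> L 0 = 0"
  using M_lin by (meson bounded_linear.linear linear_0)

lemma L_C: "L \<in> MM \<Longrightarrow> x \<in> C \<Longrightarrow> L x \<in> C"
  using L_rho[of L x] L_zero[of L] zero_C rho_C by (cases "x = 0") auto

lemma L_rho0: "L \<in> MM \<Longrightarrow> x \<in> C \<Longrightarrow> L x \<in> cone_rho C \<rho> \<or> L x = 0"
  using L_rho[of L x] L_zero[of L] by (cases "x = 0") auto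

lemma rho_sub: "p \<in> cone_rho C \<rho> \<Longrightarrow> norm q < \<rho> * norm p \<Longrightarrow> p - q \<in> C"
  unfolding cone_rho_def by (auto simp: dist_norm subset_iff)

lemma rho_scale:
  assumes p: "p \<in> cone_rho C \<rho>" and t: "t > 0"
  shows "t *\<^sub>R p \<in> cone_rho C \<rho>"
proof -
  have "t *\<^sub>R p \<in> C" using p t C_cone rho_C by auto
  moreover have "y \<in> C" if y: "y \<in> ball (t *\<^sub>R p) (\<rho> * norm (t *\<^sub>R p))" for y
  proof -
    have "norm (t *\<^sub>R p - y) < \<rho> * (t * norm p)" using y t by (simp add: dist_norm)
    moreover have "t *\<^sub>R p - y = t *\<^sub>R (p - (1/t) *\<^sub>R y)" using t by (simp add: algebra_simps)
    ultimately have "t * norm (p - (1/t) *\<^sub>R y) < t * (\<rho> * norm p)" using t by (simp add: mult_ac)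
    hence "norm (p - (1/t) *\<^sub>R y) < \<rho> * norm p" using t by simp
    hence "p - (p - (1/t) *\<^sub>R y) \<in> C" by (rule rho_sub[OF p])
    hence "(1/t) *\<^sub>R y \<in> C" by simp
    hence "t *\<^sub>R ((1/t) *\<^sub>R y) \<in> C" using C_cone t less_imp_le by blast
    thus ?thesis using t by simp
  qed
  ultimately show ?thesis unfolding cone_rho_def by blast
qed

lemma Lnorm: "L \<in> MM \<Longrightarrow> norm (L x) \<le> \<theta> * norm x"
  using onorm[of L x] M_lin H4 by (meson dual_order.trans mult_right_mono norm_ge_zero)

lemma lower:
  assumes L: "L \<in> MM" and x: "x \<in> cone_rho C \<rho>"
  shows "\<rho> * norm x / (2*K*\<theta>) \<le> ell (L x)"
proof (cases "x = 0")
  case True thus ?thesis using L_zero[OF L] by simp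
next
  case False
  interpret L: bounded_linear L using M_lin L by blast
  have Kp: "K > 0" using H1_K by simp
  have xp: "norm x > 0" using False by simp
  define s where "s = \<rho> * norm x / 2"
  have sp: "s > 0" using rho xp by (simp add: s_def)
  have ss: "s < \<rho> * norm x" using rho xp by (simp add: s_def)
  have bnd: "norm (L z) \<le> (K * ell (L x) / s) * norm z" for z
  proof (cases "z = 0")
    case True thus ?thesis by simp
  next
    case False
    define z' where "z' = (s / norm z) *\<^sub>R z"
    have nz': "norm z' = s" using False sp by (simp add: z'_def)
    have c1: "x - z' \<in> C" using rho_sub[OF x] nz' ss by simp
    have c2: "x - (- z') \<in> C" using rho_sub[OF x, of "- z'"] nz' ss by simp
    have n1: "norm (L x - L z') \<le> K * (ell (L x) - ell (L z'))"
      using normC[OF L_C[OF L c1]] by (simp add: L.diff ell.diff)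
    have n2: "norm (L x + L z') \<le> K * (ell (L x) + ell (L z'))"
      using normC[OF L_C[OF L c2]] by (simp add: L.add ell.add)
    have "2 * norm (L z') \<le> norm (L x + L z') + norm (L x - L z')"
    proof -
      have "L z' + L z' = 2 *\<^sub>R L z'" by (simp add: scaleR_2)
      hence "norm (L z' + L z') = 2 * norm (L z')" by simp
      thus ?thesis using norm_triangle_ineq4[of "L x + L z'" "L x - L z'"] by simp
    qed
    also have "\<dots> \<le> 2 * (K * ell (L x))" using n1 n2 by (simp add: algebra_simps)
    finally have "norm (L z') \<le> K * ell (L x)" by simp
    moreover have "norm (L z') = (s / norm z) * norm (L z)"
      using sp False by (simp add: z'_def L.scaleR)
    ultimately have "(s / norm z) * norm (L z) \<le> K * ell (L x)" by simp
    hence "norm (L z) \<le> K * ell (L x) * norm z / s" using sp False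
      by (simp add: field_simps)
    thus ?thesis by simp
  qed
  have "0 \<le> K * ell (L x) / s" using ell_nonneg[OF L_C[OF L rho_C[OF x]]] Kp sp by simp
  hence "onorm L \<le> K * ell (L x) / s" using onorm_bound bnd by blast
  hence "1 / \<theta> \<le> K * ell (L x) / s" using H4 L by (meson order_trans)
  hence "s \<le> \<theta> * (K * ell (L x))" using sp theta by (simp add: field_simps)
  thus ?thesis using Kp theta unfolding s_def by (simp add: field_simps)
qed

lemma T_props:
  assumes "x \<in> cone_rho_l1 C \<rho> ell"
  shows "x \<in> C" "ell x = 1" "1 \<le> norm x" "norm x \<le> K" "x \<noteq> 0" "x \<in> cone_rho C \<rho>"
proof -
  show r: "x \<in> cone_rho C \<rho>" and e: "ell x = 1" using assms unfolding cone_rho_l1_def by auto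
  show c: "x \<in> C" using rho_C[OF r] .
  show "1 \<le> norm x" using ell_abs[of x] e by simp
  show "norm x \<le> K" using normC[OF c] e by simp
  show "x \<noteq> 0" using e by auto
qed

lemma NT:
  assumes L: "L \<in> MM" and x: "x \<in> C" "x \<noteq> 0"
  shows "(1 / ell (L x)) *\<^sub>R L x \<in> cone_rho_l1 C \<rho> ell"
proof -
  have r: "L x \<in> cone_rho C \<rho>" "L x \<noteq> 0" using L_rho[OF L x] by auto
  have p: "ell (L x) > 0" using ellC_pos[OF rho_C[OF r(1)] r(2)] .
  have "(1 / ell (L x)) *\<^sub>R L x \<in> cone_rho C \<rho>" using rho_scale[OF r(1)] p by simp
  moreover have "ell ((1 / ell (L x)) *\<^sub>R L x) = 1" using p by (simp add: ell.scaleR)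
  ultimately show ?thesis unfolding cone_rho_l1_def by blast
qed

definition cmp :: "'e \<Rightarrow> 'e \<Rightarrow> real \<Rightarrow> real \<Rightarrow> bool" where
  "cmp u v a b \<longleftrightarrow> 0 < a \<and> a \<le> b \<and> u - a *\<^sub>R v \<in> C \<and> b *\<^sub>R v - u \<in> C"

lemma gam: "0 < \<rho> / (2*K)" "\<rho> / (2*K) \<le> 1"
  using rho H1_K by (auto simp: field_simps)

lemma compare:
  assumes p: "p \<in> cone_rho C \<rho> \<or> p = 0" and q: "q \<in> C" "q \<noteq> 0"
  shows "p - (\<rho>/(2*K) * ell p / ell q) *\<^sub>R q \<in> C"
proof (cases "p = 0")
  case True thus ?thesis using zero_C by simp
next
  case False
  hence pr: "p \<in> cone_rho C \<rho>" using p by blast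
  have Kp: "K > 0" using H1_K by simp
  have qp: "ell q > 0" using ellC_pos[OF q] .
  have pp: "ell p > 0" using ellC_pos[OF rho_C[OF pr] False] .
  have "norm ((\<rho>/(2*K) * ell p / ell q) *\<^sub>R q) = \<rho>/(2*K) * ell p / ell q * norm q"
    using rho Kp qp pp by simp
  also have "\<dots> \<le> \<rho>/(2*K) * ell p / ell q * (K * ell q)"
    using normC[OF q(1)] rho Kp qp pp by (intro mult_left_mono) auto
  also have "\<dots> = \<rho> / 2 * ell p" using Kp qp by simp
  also have "\<dots> < \<rho> * norm p"
  proof -
    have "ell p \<le> norm p" using ell_abs[of p] by simp
    hence "\<rho> / 2 * ell p \<le> \<rho> / 2 * norm p" using rho by simp
    moreover have "\<rho> / 2 * norm p < \<rho> * norm p" using rho False by simp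
    ultimately show ?thesis by linarith
  qed
  finally show ?thesis by (rule rho_sub[OF pr])
qed

lemma contract:
  assumes L: "L \<in> MM" and u: "u \<in> C" and v: "v \<in> C" "v \<noteq> 0" and c: "cmp u v a b"
  shows "\<exists>a' b'. cmp (L u) (L v) a' b' \<and> b'/a' - 1 \<le> (1 - \<rho>/(2*K)) * (b/a - 1)"
proof -
  interpret L: bounded_linear L using M_lin L by blast
  define g where "g = \<rho>/(2*K)"
  have g: "0 < g" "g \<le> 1" using gam unfolding g_def by auto
  have ab: "0 < a" "a \<le> b" "u - a *\<^sub>R v \<in> C" "b *\<^sub>R v - u \<in> C" using c unfolding cmp_def by auto
  have Lv: "L v \<in> C" "L v \<noteq> 0" using L_rho[OF L v] rho_C by auto
  have lv: "ell (L v) > 0" using ellC_pos[OF Lv] .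
  define A where "A = L u - a *\<^sub>R L v"
  define B where "B = b *\<^sub>R L v - L u"
  have A: "A \<in> cone_rho C \<rho> \<or> A = 0" "A \<in> C"
    using L_rho0[OF L ab(3)] L_C[OF L ab(3)] unfolding A_def by (auto simp: L.diff L.scaleR)
  have B: "B \<in> cone_rho C \<rho> \<or> B = 0" "B \<in> C"
    using L_rho0[OF L ab(4)] L_C[OF L ab(4)] unfolding B_def by (auto simp: L.diff L.scaleR)
  define a' where "a' = a + g * ell A / ell (L v)"
  define b' where "b' = b - g * ell B / ell (L v)"
  have eA: "ell A \<ge> 0" using ell_nonneg[OF A(2)] .
  have eB: "ell B \<ge> 0" using ell_nonneg[OF B(2)] .
  have sum: "ell A + ell B = (b - a) * ell (L v)"
    unfolding A_def B_def by (simp add: ell.diff ell.scaleR algebra_simps)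
  have c1: "L u - a' *\<^sub>R L v \<in> C"
  proof -
    have "L u - a' *\<^sub>R L v = A - (g * ell A / ell (L v)) *\<^sub>R L v"
      unfolding A_def a'_def by (simp add: algebra_simps)
    thus ?thesis using compare[OF A(1) Lv] unfolding g_def by simp
  qed
  have c2: "b' *\<^sub>R L v - L u \<in> C"
  proof -
    have "b' *\<^sub>R L v - L u = B - (g * ell B / ell (L v)) *\<^sub>R L v"
      unfolding B_def b'_def by (simp add: algebra_simps)
    thus ?thesis using compare[OF B(1) Lv] unfolding g_def by simp
  qed
  have a'a: "a \<le> a'" unfolding a'_def using g eA lv by simp
  have diff: "b' - a' = (1 - g) * (b - a)"
  proof -
    have "b' - a' = b - a - g * (ell A + ell B) / ell (L v)"
      unfolding a'_def b'_def by (simp add: add_divide_distrib distrib_left)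
    also have "\<dots> = (1 - g) * (b - a)"
    proof -
      have "g * (ell A + ell B) / ell (L v) = g * (b - a)" using sum lv by simp
      thus ?thesis by (simp add: algebra_simps)
    qed
    finally show ?thesis .
  qed
  have a'p: "0 < a'" using a'a ab by simp
  have "a' \<le> b'" using diff g ab by (smt (verit) mult_nonneg_nonneg)
  hence cm: "cmp (L u) (L v) a' b'" unfolding cmp_def using a'p c1 c2 by blast
  have "b'/a' - 1 = (1 - g) * (b - a) / a'" using diff a'p by (simp add: field_simps)
  also have "\<dots> \<le> (1 - g) * (b - a) / a"
    using a'a ab g by (intro divide_left_mono) (auto intro: mult_nonneg_nonneg)
  also have "\<dots> = (1 - g) * (b/a - 1)" using ab by (simp add: field_simps)
  finally show ?thesis using cm unfolding g_def by blast
qed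

lemma cmp_norm:
  assumes "cmp u v a b" "c > 0" "d > 0"
  shows "cmp ((1/c) *\<^sub>R u) ((1/d) *\<^sub>R v) (a*d/c) (b*d/c)"
proof -
  have ab: "0 < a" "a \<le> b" "u - a *\<^sub>R v \<in> C" "b *\<^sub>R v - u \<in> C" using assms unfolding cmp_def by auto
  have "(1/c) *\<^sub>R u - (a*d/c) *\<^sub>R ((1/d) *\<^sub>R v) = (1/c) *\<^sub>R (u - a *\<^sub>R v)"
    using assms by (simp add: algebra_simps)
  moreover have "(b*d/c) *\<^sub>R ((1/d) *\<^sub>R v) - (1/c) *\<^sub>R u = (1/c) *\<^sub>R (b *\<^sub>R v - u)"
    using assms by (simp add: algebra_simps)
  moreover have "a*d/c \<le> b*d/c" using ab assms by (simp add: divide_right_mono)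
  ultimately show ?thesis unfolding cmp_def using ab assms C_cone by auto
qed

lemma cmp_dist:
  assumes "cmp u v a b" "ell u = 1" "ell v = 1" "norm v \<le> K"
  shows "norm (u - v) \<le> 2 * K * (b/a - 1)"
proof -
  have ab: "0 < a" "a \<le> b" "u - a *\<^sub>R v \<in> C" "b *\<^sub>R v - u \<in> C" using assms unfolding cmp_def by auto
  have e1: "ell (u - a *\<^sub>R v) = 1 - a" using assms by (simp add: ell.diff ell.scaleR)
  have e2: "ell (b *\<^sub>R v - u) = b - 1" using assms by (simp add: ell.diff ell.scaleR)
  have a1: "a \<le> 1" using ell_nonneg[OF ab(3)] e1 by simp
  have b1: "1 \<le> b" using ell_nonneg[OF ab(4)] e2 by simp
  have eq: "u - v = (u - a *\<^sub>R v) - (1 - a) *\<^sub>R v" by (simp add: algebra_simps)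
  have "norm (u - v) \<le> norm (u - a *\<^sub>R v) + norm ((1 - a) *\<^sub>R v)"
    unfolding eq by (rule norm_triangle_ineq4)
  hence "norm (u - v) \<le> norm (u - a *\<^sub>R v) + (1 - a) * norm v" using a1 by simp
  also have "\<dots> \<le> K * (1 - a) + (1 - a) * K"
    using normC[OF ab(3)] e1 assms(4) a1 by (intro add_mono mult_left_mono) auto
  also have "\<dots> = 2 * K * (1 - a)" by simp
  also have "\<dots> \<le> 2 * K * (b/a - 1)"
  proof -
    have "1 - a \<le> b - a" using b1 by simp
    also have "\<dots> \<le> (b - a) / a" using ab a1 by (simp add: le_divide_eq mult_left_le)
    also have "\<dots> = b/a - 1" using ab by (simp add: field_simps)
    finally show ?thesis using H1_K by simp
  qed
  finally show ?thesis .
qed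

lemma cmp_base:
  assumes x: "x \<in> cone_rho_l1 C \<rho> ell" and y: "y \<in> cone_rho_l1 C \<rho> ell"
  shows "cmp x y (\<rho>/(2*K)) (2*K/\<rho>)"
proof -
  have Kp: "K > 0" using H1_K by simp
  have c1: "x - (\<rho>/(2*K)) *\<^sub>R y \<in> C"
  proof (rule rho_sub[OF T_props(6)[OF x]])
    have "norm ((\<rho>/(2*K)) *\<^sub>R y) = \<rho>/(2*K) * norm y" using rho Kp by simp
    also have "\<dots> \<le> \<rho>/(2*K) * K" using T_props(4)[OF y] rho Kp by (intro mult_left_mono) auto
    also have "\<dots> < \<rho>" using rho Kp by simp
    also have "\<dots> \<le> \<rho> * norm x" using T_props(3)[OF x] rho by simp
    finally show "norm ((\<rho>/(2*K)) *\<^sub>R y) < \<rho> * norm x" .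
  qed
  have c2': "y - (\<rho>/(2*K)) *\<^sub>R x \<in> C"
  proof (rule rho_sub[OF T_props(6)[OF y]])
    have "norm ((\<rho>/(2*K)) *\<^sub>R x) = \<rho>/(2*K) * norm x" using rho Kp by simp
    also have "\<dots> \<le> \<rho>/(2*K) * K" using T_props(4)[OF x] rho Kp by (intro mult_left_mono) auto
    also have "\<dots> < \<rho>" using rho Kp by simp
    also have "\<dots> \<le> \<rho> * norm y" using T_props(3)[OF y] rho by simp
    finally show "norm ((\<rho>/(2*K)) *\<^sub>R x) < \<rho> * norm y" .
  qed
  have "(2*K/\<rho>) *\<^sub>R (y - (\<rho>/(2*K)) *\<^sub>R x) \<in> C" using c2' C_cone rho Kp by auto
  moreover have "(2*K/\<rho>) *\<^sub>R (y - (\<rho>/(2*K)) *\<^sub>R x) = (2*K/\<rho>) *\<^sub>R y - x"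
    using rho Kp by (simp add: algebra_simps)
  ultimately have c2: "(2*K/\<rho>) *\<^sub>R y - x \<in> C" by simp
  have "\<rho>/(2*K) \<le> 1" using gam by simp
  also have "1 \<le> 2*K/\<rho>" using rho H1_K by (simp add: field_simps)
  finally show ?thesis unfolding cmp_def using c1 c2 gam by simp
qed


lemma TT_closed:
  assumes x: "\<forall>n. x n \<in> cone_rho_l1 C \<rho> ell" and lim: "x \<longlonglongrightarrow> y"
  shows "y \<in> cone_rho_l1 C \<rho> ell"
proof -
  have xC: "\<forall>n. x n \<in> C" using x T_props(1) by blast
  have yC: "y \<in> C" using closed_sequentially[OF C_closed _ lim] xC by blast
  have "(\<lambda>n. ell (x n)) \<longlonglongrightarrow> ell y" using ell.tendsto[OF lim] .
  moreover have "(\<lambda>n. ell (x n)) = (\<lambda>n. 1)" using x T_props(2) by auto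
  ultimately have ey: "ell y = 1" using LIMSEQ_unique tendsto_const by metis
  have "z \<in> C" if z: "z \<in> ball y (\<rho> * norm y)" for z
  proof -
    have "(\<lambda>n. \<rho> * norm (x n) - dist (x n) z) \<longlonglongrightarrow> \<rho> * norm y - dist y z"
      by (intro tendsto_intros lim)
    moreover have "0 < \<rho> * norm y - dist y z" using z by simp
    ultimately have "eventually (\<lambda>n. 0 < \<rho> * norm (x n) - dist (x n) z) sequentially"
      by (rule order_tendstoD(1))
    then obtain N where "0 < \<rho> * norm (x N) - dist (x N) z" by (meson eventually_sequentially order_refl)
    hence "z \<in> ball (x N) (\<rho> * norm (x N))" by simp
    thus ?thesis using x T_props(6) unfolding cone_rho_def by blast
  qed
  hence "y \<in> cone_rho C \<rho>" using yC unfolding cone_rho_def by blast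
  thus ?thesis using ey unfolding cone_rho_l1_def by blast
qed

lemma N_lip:
  assumes c0: "c0 > 0" and B: "B \<ge> 0"
  shows "(1/c0 + B/(c0*c0))-lipschitz_on {x. c0 \<le> ell x \<and> norm x \<le> B} (\<lambda>x. (1 / ell x) *\<^sub>R x)"
proof (rule lipschitz_onI)
  show "0 \<le> 1/c0 + B/(c0*c0)" using c0 B by simp
  fix x y assume x: "x \<in> {x. c0 \<le> ell x \<and> norm x \<le> B}" and y: "y \<in> {x. c0 \<le> ell x \<and> norm x \<le> B}"
  have ex: "ell x \<ge> c0" "ell y \<ge> c0" "norm y \<le> B" using x y by auto
  have px: "ell x > 0" "ell y > 0" using ex c0 by auto
  have eq: "(1 / ell x) *\<^sub>R x - (1 / ell y) *\<^sub>R y = (1 / ell x) *\<^sub>R (x - y) + (1 / ell x - 1 / ell y) *\<^sub>R y"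
    by (simp add: algebra_simps)
  have d1: "norm ((1 / ell x) *\<^sub>R (x - y)) \<le> (1/c0) * norm (x - y)"
    using px ex c0 by (simp add: divide_right_mono frac_le mult_right_mono)
  have "\<bar>1 / ell x - 1 / ell y\<bar> = \<bar>ell y - ell x\<bar> / (ell x * ell y)"
    using px by (simp add: field_simps abs_div)
  also have "\<dots> \<le> norm (x - y) / (ell x * ell y)"
  proof -
    have "\<bar>ell y - ell x\<bar> = \<bar>ell (x - y)\<bar>" by (simp add: ell.diff)
    also have "\<dots> \<le> norm (x - y)" by (rule ell_abs)
    finally show ?thesis using px by (simp add: divide_right_mono)
  qed
  also have "\<dots> \<le> norm (x - y) / (c0 * c0)"
    using px ex c0 by (intro divide_left_mono mult_mono) auto
  finally have d2': "\<bar>1 / ell x - 1 / ell y\<bar> \<le> norm (x - y) / (c0 * c0)" .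
  have d2: "norm ((1 / ell x - 1 / ell y) *\<^sub>R y) \<le> B / (c0 * c0) * norm (x - y)"
  proof -
    have "norm ((1 / ell x - 1 / ell y) *\<^sub>R y) = \<bar>1 / ell x - 1 / ell y\<bar> * norm y" by simp
    also have "\<dots> \<le> norm (x - y) / (c0 * c0) * B"
      using d2' ex by (intro mult_mono) auto
    also have "\<dots> = B / (c0 * c0) * norm (x - y)" by simp
    finally show ?thesis .
  qed
  have "dist ((1 / ell x) *\<^sub>R x) ((1 / ell y) *\<^sub>R y) \<le> (1/c0) * norm (x - y) + B / (c0 * c0) * norm (x - y)"
    unfolding dist_norm eq using norm_triangle_le[OF add_mono[OF d1 d2]] .
  thus "dist ((1 / ell x) *\<^sub>R x) ((1 / ell y) *\<^sub>R y) \<le> (1/c0 + B/(c0*c0)) * dist x y"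
    by (simp add: dist_norm algebra_simps)
qed

end

locale dyn = cone_setup C ell K \<rho> \<theta> MM
  for C :: "'e::banach set" and ell K \<rho> \<theta> MM +
  fixes Lf :: "'w \<Rightarrow> 'e \<Rightarrow> 'e" and \<tau>i :: "'w \<Rightarrow> 'w" and \<Omega> :: "'w set"
  assumes L_vals: "\<forall>\<omega>\<in>\<Omega>. Lf \<omega> \<in> MM" and tau_S: "\<forall>\<omega>\<in>\<Omega>. \<tau>i \<omega> \<in> \<Omega>"
begin

abbreviation "TT \<equiv> cone_rho_l1 C \<rho> ell"
abbreviation "pp \<equiv> proj_op Lf \<tau>i ell"
abbreviation "R0 \<equiv> (2*K/\<rho>) / (\<rho>/(2*K)) - 1"
abbreviation "q \<equiv> 1 - \<rho>/(2*K)"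

lemma pi_T: "\<forall>\<omega>\<in>\<Omega>. g \<omega> \<in> TT \<Longrightarrow> \<omega> \<in> \<Omega> \<Longrightarrow> pp g \<omega> \<in> TT"
  unfolding proj_op_def using NT L_vals tau_S T_props by metis

lemma piN_T: "\<forall>\<omega>\<in>\<Omega>. g \<omega> \<in> TT \<Longrightarrow> \<forall>\<omega>\<in>\<Omega>. (pp ^^ n) g \<omega> \<in> TT"
  by (induction n) (auto intro: pi_T)

lemma key:
  assumes g: "\<forall>\<omega>\<in>\<Omega>. g \<omega> \<in> TT" and h: "\<forall>\<omega>\<in>\<Omega>. h \<omega> \<in> TT"
  shows "\<omega> \<in> \<Omega> \<Longrightarrow> \<exists>a b. cmp ((pp ^^ n) g \<omega>) ((pp ^^ n) h \<omega>) a b \<and> b/a - 1 \<le> q ^ n * R0"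
proof (induction n arbitrary: \<omega>)
  case 0
  have "cmp (g \<omega>) (h \<omega>) (\<rho>/(2*K)) (2*K/\<rho>)" using cmp_base g h 0 by auto
  thus ?case by (intro exI[of _ "\<rho>/(2*K)"] exI[of _ "2*K/\<rho>"]) simp
next
  case (Suc n)
  define w where "w = \<tau>i \<omega>"
  have w: "w \<in> \<Omega>" using tau_S Suc.prems unfolding w_def by blast
  define u where "u = (pp ^^ n) g w"
  define v where "v = (pp ^^ n) h w"
  define L where "L = Lf w"
  have L: "L \<in> MM" using L_vals w unfolding L_def by blast
  have uT: "u \<in> TT" using piN_T[OF g] w unfolding u_def by blast
  have vT: "v \<in> TT" using piN_T[OF h] w unfolding v_def by blast
  obtain a b where ab: "cmp u v a b" "b/a - 1 \<le> q ^ n * R0" using Suc.IH[OF w] unfolding u_def v_def by blast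
  obtain a' b' where ab': "cmp (L u) (L v) a' b'" "b'/a' - 1 \<le> q * (b/a - 1)"
    using contract[OF L T_props(1)[OF uT] T_props(1)[OF vT] T_props(5)[OF vT] ab(1)] by blast
  have lu: "ell (L u) > 0" using L_rho[OF L T_props(1)[OF uT] T_props(5)[OF uT]] rho_C ellC_pos by blast
  have lv: "ell (L v) > 0" using L_rho[OF L T_props(1)[OF vT] T_props(5)[OF vT]] rho_C ellC_pos by blast
  have c: "cmp ((1 / ell (L u)) *\<^sub>R L u) ((1 / ell (L v)) *\<^sub>R L v) (a' * ell (L v) / ell (L u)) (b' * ell (L v) / ell (L u))"
    by (rule cmp_norm[OF ab'(1) lu lv])
  have e1: "(pp ^^ Suc n) g \<omega> = (1 / ell (L u)) *\<^sub>R L u"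
    by (simp add: proj_op_def u_def L_def w_def)
  have e2: "(pp ^^ Suc n) h \<omega> = (1 / ell (L v)) *\<^sub>R L v"
    by (simp add: proj_op_def v_def L_def w_def)
  have a'p: "a' > 0" using ab'(1) unfolding cmp_def by simp
  have rat: "(b' * ell (L v) / ell (L u)) / (a' * ell (L v) / ell (L u)) = b' / a'"
    using lu lv a'p by (simp add: field_simps)
  have qn: "0 \<le> q" using gam by simp
  have "b'/a' - 1 \<le> q * (q ^ n * R0)" using ab'(2) ab(2) qn
    by (meson mult_left_mono order_trans)
  hence "b'/a' - 1 \<le> q ^ Suc n * R0" by (simp add: mult.assoc)
  thus ?case using c e1 e2 rat by metis
qed

lemma key_dist:
  assumes g: "\<forall>\<omega>\<in>\<Omega>. g \<omega> \<in> TT" and h: "\<forall>\<omega>\<in>\<Omega>. h \<omega> \<in> TT" and w: "\<omega> \<in> \<Omega>"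
  shows "norm ((pp ^^ n) g \<omega> - (pp ^^ n) h \<omega>) \<le> 2 * K * (q ^ n * R0)"
proof -
  obtain a b where ab: "cmp ((pp ^^ n) g \<omega>) ((pp ^^ n) h \<omega>) a b" "b/a - 1 \<le> q ^ n * R0"
    using key[OF g h w] by blast
  have gT: "(pp ^^ n) g \<omega> \<in> TT" using piN_T[OF g] w by blast
  have hT: "(pp ^^ n) h \<omega> \<in> TT" using piN_T[OF h] w by blast
  have "norm ((pp ^^ n) g \<omega> - (pp ^^ n) h \<omega>) \<le> 2 * K * (b/a - 1)"
    using cmp_dist[OF ab(1) T_props(2)[OF gT] T_props(2)[OF hT] T_props(4)[OF hT]] .
  also have "\<dots> \<le> 2 * K * (q ^ n * R0)" using ab(2) H1_K by simp
  finally show ?thesis .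
qed

lemma fix_iter:
  assumes "\<forall>\<omega>\<in>\<Omega>. g \<omega> = pp g \<omega>"
  shows "\<omega> \<in> \<Omega> \<Longrightarrow> (pp ^^ n) g \<omega> = g \<omega>"
proof (induction n arbitrary: \<omega>)
  case 0 thus ?case by simp
next
  case (Suc n)
  have i: "(pp ^^ n) g (\<tau>i \<omega>) = g (\<tau>i \<omega>)" using Suc.IH[of "\<tau>i \<omega>"] tau_S Suc.prems by blast
  have "(pp ^^ Suc n) g \<omega> = pp ((pp ^^ n) g) \<omega>" by simp
  also have "\<dots> = pp g \<omega>" unfolding proj_op_def i ..
  finally have "(pp ^^ Suc n) g \<omega> = pp g \<omega>" .
  thus ?case using assms Suc.prems by simp
qed

lemma small: "e > 0 \<Longrightarrow> \<exists>n. 2 * K * (q ^ n * R0) < e"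
proof -
  assume e: "e > 0"
  have q: "0 \<le> q" "q < 1" using gam by auto
  have "(\<lambda>n. 2 * K * (q ^ n * R0)) \<longlonglongrightarrow> 2 * K * (0 * R0)"
    using q by (intro tendsto_intros LIMSEQ_power_zero) auto
  hence "eventually (\<lambda>n. 2 * K * (q ^ n * R0) < e) sequentially"
    using e by (intro order_tendstoD(2)) auto
  thus ?thesis by (meson eventually_sequentially order_refl)
qed

lemma bound_mono: "m \<le> n \<Longrightarrow> 2 * K * (q ^ n * R0) \<le> 2 * K * (q ^ m * R0)"
proof -
  assume mn: "m \<le> n"
  have q: "0 \<le> q" "q \<le> 1" using gam by auto
  have R: "0 \<le> R0"
  proof -
    have eq: "(2*K/\<rho>) / (\<rho>/(2*K)) = (2*K) * (2*K) / (\<rho>*\<rho>)" using rho H1_K by (simp add: field_simps)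
    have "\<rho>*\<rho> \<le> (2*K) * (2*K)" using mult_mono[of \<rho> "2*K" \<rho> "2*K"] rho H1_K by simp
    hence "1 \<le> (2*K/\<rho>) / (\<rho>/(2*K))" unfolding eq using rho by simp
    thus ?thesis by simp
  qed
  have "q ^ n \<le> q ^ m" using q mn by (simp add: power_decreasing)
  thus ?thesis using R H1_K by (simp add: mult_right_mono)
qed

end

theorem lemma2p1:
  fixes C :: "'e::banach set" and ell :: "'e \<Rightarrow> real" and K \<rho> \<theta> :: real
    and \<M> :: "('e \<Rightarrow> 'e) set"
    and P :: "'w measure" and \<tau> \<tau>i :: "'w \<Rightarrow> 'w"
    and Lf :: "'w \<Rightarrow> 'e \<Rightarrow> 'e"
  assumes C_closed: "closed C" and C_convex: "convex C"
    and C_cone: "\<forall>t\<ge>0. \<forall>x\<in>C. t *\<^sub>R x \<in> C" and C_nonempty: "C \<noteq> {}"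
    and C_pointed: "C \<inter> uminus ` C = {0}"
    and H1_lin: "bounded_linear ell" and H1_norm: "onorm ell = 1"
    and H1_K: "1 \<le> K" and H1: "\<forall>\<phi>\<in>C. ell \<phi> \<ge> norm \<phi> / K"
    and H2_rho: "0 < \<rho>" "\<rho> \<le> 1"
    and H2: "\<exists>\<phi>\<in>cone_rho C \<rho>. \<phi> \<noteq> 0"
    and theta: "1 \<le> \<theta>"
    and M_lin: "\<forall>L\<in>\<M>. bounded_linear L"
    and H3: "\<forall>L\<in>\<M>. L ` (C - {0}) \<subseteq> cone_rho C \<rho> - {0}"
    and H4: "\<forall>L\<in>\<M>. 1 / \<theta> \<le> onorm L \<and> onorm L \<le> \<theta>"
    and prob: "prob_space P"
    and tau_pres: "meas_preserving P \<tau>" and taui_pres: "meas_preserving P \<tau>i"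
    and tau_inv1: "\<forall>\<omega>\<in>space P. \<tau>i (\<tau> \<omega>) = \<omega>"
    and tau_inv2: "\<forall>\<omega>\<in>space P. \<tau> (\<tau>i \<omega>) = \<omega>"
    and tau_erg: "ergodic_map P \<tau>"
    and L_vals: "\<forall>\<omega>\<in>space P. Lf \<omega> \<in> \<M>"
    and L_welldef: "\<forall>\<phi>\<in>Linf_sections P. bochner_meas P (\<lambda>\<omega>. Lf (\<tau>i \<omega>) (\<phi> (\<tau>i \<omega>)))"
  shows "\<exists>f\<in>Linf_sections P.
           (\<forall>\<omega>\<in>space P. f \<omega> \<in> cone_rho_l1 C \<rho> ell \<and> f \<omega> = proj_op Lf \<tau>i ell f \<omega>) \<and>
           (\<forall>g\<in>Linf_sections P.
              (\<forall>\<omega>\<in>space P. g \<omega> \<in> cone_rho_l1 C \<rho> ell \<and> g \<omega> = proj_op Lf \<tau>i ell g \<omega>)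
              \<longrightarrow> (\<forall>\<omega>\<in>space P. g \<omega> = f \<omega>))"
proof -
  have tS: "\<forall>\<omega>\<in>space P. \<tau>i \<omega> \<in> space P"
  proof
    fix \<omega> assume "\<omega> \<in> space P"
    moreover have "\<tau>i \<in> measurable P P" using taui_pres unfolding meas_preserving_def by (rule conjunct1)
    ultimately show "\<tau>i \<omega> \<in> space P" by (rule measurable_space[rotated])
  qed
  interpret D: dyn C ell K \<rho> \<theta> \<M> Lf \<tau>i "space P"
    by (intro dyn.intro cone_setup.intro dyn_axioms.intro; (rule C_closed C_cone C_nonempty H1_lin H1_norm H1_K H1 H2_rho theta M_lin H3 H4 L_vals tS)?)
  let ?pi = "proj_op Lf \<tau>i ell"
  let ?T = "cone_rho_l1 C \<rho> ell"
  define b where "b n = 2 * K * ((1 - \<rho>/(2*K)) ^ n * ((2*K/\<rho>) / (\<rho>/(2*K)) - 1))" for n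
  have small: "\<And>e. e > 0 \<Longrightarrow> \<exists>n. b n < e" unfolding b_def using D.small by blast
  have bmono: "\<And>m n. m \<le> n \<Longrightarrow> b n \<le> b m" unfolding b_def using D.bound_mono by blast
  have Kp: "K > 0" using H1_K by simp
  obtain \<phi> where \<phi>: "\<phi> \<in> cone_rho C \<rho>" "\<phi> \<noteq> 0" using H2 by blast
  have e\<phi>: "ell \<phi> > 0" using D.ellC_pos[OF D.rho_C[OF \<phi>(1)] \<phi>(2)] .
  define \<phi>0 where "\<phi>0 = (1 / ell \<phi>) *\<^sub>R \<phi>"
  have \<phi>0: "\<phi>0 \<in> ?T"
  proof -
    have "\<phi>0 \<in> cone_rho C \<rho>" unfolding \<phi>0_def using D.rho_scale[OF \<phi>(1)] e\<phi> by simp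
    moreover have "ell \<phi>0 = 1" unfolding \<phi>0_def using e\<phi> by (simp add: D.ell.scaleR)
    ultimately show ?thesis unfolding cone_rho_l1_def by blast
  qed
  define c where "c = (\<lambda>\<omega>::'w. \<phi>0)"
  have cT: "\<forall>\<omega>\<in>space P. c \<omega> \<in> ?T" using \<phi>0 unfolding c_def by simp
  define fn where "fn n = (?pi ^^ n) c" for n
  have fnT: "\<forall>\<omega>\<in>space P. fn n \<omega> \<in> ?T" for n unfolding fn_def using D.piN_T[OF cT] .
  have c_bm: "bochner_meas P c"
  proof -
    have "countably_valued_meas P c"
    proof -
      have "c ` space P \<subseteq> {\<phi>0}" unfolding c_def by auto
      hence "countable (c ` space P)" by (meson countable_empty countable_insert countable_subset)
      moreover have "c -` {y} \<inter> space P \<in> sets P" for y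
        by (cases "y = \<phi>0") (auto simp: c_def)
      ultimately show ?thesis unfolding countably_valued_meas_def by blast
    qed
    thus ?thesis unfolding bochner_meas_def by (intro exI[of _ "\<lambda>n. c"]) auto
  qed
  have fnX: "fn n \<in> Linf_sections P" for n
  proof (induction n)
    case 0
    have "\<forall>\<omega>\<in>space P. norm (fn 0 \<omega>) \<le> K" using fnT D.T_props(4) by blast
    thus ?case using c_bm unfolding Linf_sections_def fn_def by auto
  next
    case (Suc n)
    define G where "G \<omega> = Lf (\<tau>i \<omega>) (fn n (\<tau>i \<omega>))" for \<omega>
    have Gbm: "bochner_meas P G" using L_welldef Suc.IH unfolding G_def by blast
    define c0 where "c0 = \<rho> / (2*K*\<theta>)"
    have c0: "c0 > 0" unfolding c0_def using H2_rho Kp theta by simp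
    define S where "S = {x. c0 \<le> ell x \<and> norm x \<le> \<theta> * K}"
    have GS: "\<forall>\<omega>\<in>space P. G \<omega> \<in> S"
    proof
      fix \<omega> assume w: "\<omega> \<in> space P"
      have w': "\<tau>i \<omega> \<in> space P" using tS w by blast
      have L: "Lf (\<tau>i \<omega>) \<in> \<M>" using L_vals w' by blast
      have xT: "fn n (\<tau>i \<omega>) \<in> ?T" using fnT w' by blast
      have "\<rho> * norm (fn n (\<tau>i \<omega>)) / (2*K*\<theta>) \<le> ell (G \<omega>)"
        unfolding G_def by (rule D.lower[OF L D.T_props(6)[OF xT]])
      moreover have "c0 \<le> \<rho> * norm (fn n (\<tau>i \<omega>)) / (2*K*\<theta>)"
        unfolding c0_def using D.T_props(3)[OF xT] H2_rho Kp theta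
        by (intro divide_right_mono) auto
      moreover have "norm (G \<omega>) \<le> \<theta> * K"
      proof -
        have "norm (G \<omega>) \<le> \<theta> * norm (fn n (\<tau>i \<omega>))" unfolding G_def by (rule D.Lnorm[OF L])
        also have "\<dots> \<le> \<theta> * K" using D.T_props(4)[OF xT] theta by simp
        finally show ?thesis .
      qed
      ultimately show "G \<omega> \<in> S" unfolding S_def by simp
    qed
    have uc: "uniformly_continuous_on S (\<lambda>x. (1 / ell x) *\<^sub>R x)"
      unfolding S_def using D.N_lip[OF c0, of "\<theta> * K"] theta Kp
      by (intro lipschitz_on_uniformly_continuous) auto
    have "bochner_meas P (\<lambda>\<omega>. (1 / ell (G \<omega>)) *\<^sub>R G \<omega>)" by (rule bm_uc[OF Gbm GS uc])
    moreover have "fn (Suc n) = (\<lambda>\<omega>. (1 / ell (G \<omega>)) *\<^sub>R G \<omega>)"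
      unfolding fn_def G_def by (auto simp: proj_op_def)
    moreover have "\<forall>\<omega>\<in>space P. norm (fn (Suc n) \<omega>) \<le> K" using fnT D.T_props(4) by blast
    ultimately show ?case unfolding Linf_sections_def by auto
  qed
  have cau: "norm (fn m \<omega> - fn n \<omega>) \<le> b n" if "n \<le> m" "\<omega> \<in> space P" for m n \<omega>
  proof -
    have "fn m = (?pi ^^ n) ((?pi ^^ (m - n)) c)"
      unfolding fn_def using that(1) by (metis funpow_add le_add_diff_inverse o_apply)
    moreover have "\<forall>\<omega>\<in>space P. (?pi ^^ (m - n)) c \<omega> \<in> ?T" using D.piN_T[OF cT] .
    ultimately show ?thesis unfolding b_def fn_def using D.key_dist[OF _ cT that(2)] by simp
  qed
  define f where "f \<omega> = lim (\<lambda>n. fn n \<omega>)" for \<omega>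
  have flim: "(\<lambda>n. fn n \<omega>) \<longlonglongrightarrow> f \<omega>" if w: "\<omega> \<in> space P" for \<omega>
  proof -
    have "Cauchy (\<lambda>n. fn n \<omega>)"
    proof (rule CauchyI)
      fix e :: real assume e: "e > 0"
      obtain N where N: "b N < e" using small e by blast
      have "norm (fn m \<omega> - fn n \<omega>) < e" if "m \<ge> N" "n \<ge> N" for m n
      proof (cases "n \<le> m")
        case True
        thus ?thesis using cau[OF True w] bmono[OF that(2)] N by linarith
      next
        case False
        hence "norm (fn n \<omega> - fn m \<omega>) \<le> b m" using cau w by simp
        thus ?thesis using bmono[OF that(1)] N by (simp add: norm_minus_commute)
      qed
      thus "\<exists>M. \<forall>m\<ge>M. \<forall>n\<ge>M. norm (fn m \<omega> - fn n \<omega>) < e" by blast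
    qed
    hence "convergent (\<lambda>n. fn n \<omega>)" by (simp add: Cauchy_convergent_iff)
    thus ?thesis unfolding f_def by (simp add: convergent_LIMSEQ_iff)
  qed
  have fbound: "norm (f \<omega> - fn n \<omega>) \<le> b n" if w: "\<omega> \<in> space P" for \<omega> n
  proof -
    have "(\<lambda>m. norm (fn m \<omega> - fn n \<omega>)) \<longlonglongrightarrow> norm (f \<omega> - fn n \<omega>)"
      by (intro tendsto_intros flim[OF w])
    moreover have "eventually (\<lambda>m. norm (fn m \<omega> - fn n \<omega>) \<le> b n) sequentially"
      using eventually_ge_at_top[of n] by (rule eventually_mono) (rule cau[OF _ w])
    ultimately show ?thesis by (rule tendsto_upperbound) simp
  qed
  have fT: "\<forall>\<omega>\<in>space P. f \<omega> \<in> ?T"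
  proof
    fix \<omega> assume w: "\<omega> \<in> space P"
    show "f \<omega> \<in> ?T" by (rule D.TT_closed[OF _ flim[OF w]]) (use fnT w in blast)
  qed
  have ffix: "\<forall>\<omega>\<in>space P. f \<omega> = ?pi f \<omega>"
  proof
    fix \<omega> assume w: "\<omega> \<in> space P"
    have w': "\<tau>i \<omega> \<in> space P" using tS w by blast
    define L where "L = Lf (\<tau>i \<omega>)"
    have L: "L \<in> \<M>" using L_vals w' unfolding L_def by blast
    interpret L: bounded_linear L using M_lin L by blast
    have fw: "f (\<tau>i \<omega>) \<in> ?T" using fT w' by blast
    have ne: "ell (L (f (\<tau>i \<omega>))) \<noteq> 0"
      using D.L_rho[OF L D.T_props(1)[OF fw] D.T_props(5)[OF fw]] D.rho_C D.ellC_pos by force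
    have l1: "(\<lambda>n. fn n (\<tau>i \<omega>)) \<longlonglongrightarrow> f (\<tau>i \<omega>)" using flim[OF w'] .
    have "(\<lambda>n. (1 / ell (L (fn n (\<tau>i \<omega>)))) *\<^sub>R L (fn n (\<tau>i \<omega>)))
          \<longlonglongrightarrow> (1 / ell (L (f (\<tau>i \<omega>)))) *\<^sub>R L (f (\<tau>i \<omega>))"
      by (intro tendsto_intros L.tendsto D.ell.tendsto l1 ne)
    moreover have "(\<lambda>n. (1 / ell (L (fn n (\<tau>i \<omega>)))) *\<^sub>R L (fn n (\<tau>i \<omega>))) = (\<lambda>n. fn (Suc n) \<omega>)"
      unfolding fn_def L_def by (auto simp: proj_op_def)
    moreover have "(\<lambda>n. fn (Suc n) \<omega>) \<longlonglongrightarrow> f \<omega>" using flim[OF w] by (rule LIMSEQ_Suc)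
    ultimately have "f \<omega> = (1 / ell (L (f (\<tau>i \<omega>)))) *\<^sub>R L (f (\<tau>i \<omega>))"
      using LIMSEQ_unique by metis
    thus "f \<omega> = ?pi f \<omega>" unfolding proj_op_def L_def .
  qed
  have fX: "f \<in> Linf_sections P"
  proof -
    have "\<forall>k. bochner_meas P (fn k)" using fnX unfolding Linf_sections_def by blast
    moreover have "\<forall>e>0. \<exists>N. \<forall>k\<ge>N. \<forall>\<omega>\<in>space P. dist (fn k \<omega>) (f \<omega>) < e"
    proof (intro allI impI)
      fix e :: real assume e: "e > 0"
      obtain N where N: "b N < e" using small e by blast
      have "dist (fn k \<omega>) (f \<omega>) < e" if "k \<ge> N" "\<omega> \<in> space P" for k \<omega>
        using fbound[OF that(2), of k] bmono[OF that(1)] N by (simp add: dist_norm norm_minus_commute)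
      thus "\<exists>N. \<forall>k\<ge>N. \<forall>\<omega>\<in>space P. dist (fn k \<omega>) (f \<omega>) < e" by blast
    qed
    ultimately have "bochner_meas P f" by (rule bm_ulim)
    moreover have "\<forall>\<omega>\<in>space P. norm (f \<omega>) \<le> K" using fT D.T_props(4) by blast
    ultimately show ?thesis unfolding Linf_sections_def by blast
  qed
  have uniq: "\<forall>\<omega>\<in>space P. g \<omega> = f \<omega>"
    if gT: "\<forall>\<omega>\<in>space P. g \<omega> \<in> ?T \<and> g \<omega> = ?pi g \<omega>" for g
  proof
    fix \<omega> assume w: "\<omega> \<in> space P"
    have gT': "\<forall>\<omega>\<in>space P. g \<omega> \<in> ?T" using gT by blast
    have gF: "\<forall>\<omega>\<in>space P. g \<omega> = ?pi g \<omega>" using gT by blast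
    have bnd: "norm (g \<omega> - f \<omega>) \<le> b n" for n
    proof -
      have "norm ((?pi ^^ n) g \<omega> - (?pi ^^ n) f \<omega>) \<le> b n"
        unfolding b_def by (rule D.key_dist[OF gT' fT w])
      thus ?thesis using D.fix_iter[OF gF w, of n] D.fix_iter[OF ffix w, of n] by simp
    qed
    show "g \<omega> = f \<omega>"
    proof (rule ccontr)
      assume "g \<omega> \<noteq> f \<omega>"
      hence "norm (g \<omega> - f \<omega>) > 0" by simp
      then obtain n where "b n < norm (g \<omega> - f \<omega>)" using small by blast
      thus False using bnd[of n] by simp
    qed
  qed
  show ?thesis using fX fT ffix uniq by blast
qed

end
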